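(* Let $\bar\gamma_{\mathrm{E}}>0$, $\mathcal{R}>0$ and $\alpha>0$ be fixed, and let $\bar\gamma_{\mathrm{D}}>0$ with $\bar\gamma_{\mathrm{R}}=\alpha\bar\gamma_{\mathrm{D}}$. Let $h_{\mathrm{S},\mathrm{R}},h_{\mathrm{R},\mathrm{D}},h_{\mathrm{S},\mathrm{E}},h_{\mathrm{R},\mathrm{E}}$ be independent $\mathcal{CN}(0,1)$ random variables, and define $$\mathcal{R}^{3}_{\mathrm{S}\to\mathrm{R}}=\log_2\frac{1+\bar\gamma_{\mathrm{R}}|h_{\mathrm{S},\mathrm{R}}|^2}{1+\bar\gamma_{\mathrm{E}}|h_{\mathrm{S},\mathrm{E}}|^2},\qquad \mathcal{R}^{3}_{\mathrm{R}\to\mathrm{D}}=\log_2\frac{1+\bar\gamma_{\mathrm{D}}|h_{\mathrm{R},\mathrm{D}}|^2}{1+\bar\gamma_{\mathrm{E}}|h_{\mathrm{R},\mathrm{E}}|^2},$$ $\mathcal{R}_3=\max\{\min\{\mathcal{R}^{3}_{\mathrm{S}\to\mathrm{R}},\mathcal{R}^{3}_{\mathrm{R}\to\mathrm{D}}\},0\}$ and $\mathcal{P}_3=\Pr(\mathcal{R}_3<\mathcal{R})$. Then as $\bar\gamma_{\mathrm{D}}\to\infty$, $$\mathcal{P}_3\approx\mathcal{M}_3\bar\gamma_{\mathrm{D}}^{-1},$$ in the sense that $\bar\gamma_{\mathrm{D}}\mathcal{P}_3\to\mathcal{M}_3$, where $\mathcal{M}_3=(2^{\mathcal{R}}-1)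(1+1/\alpha)+2^{\mathcal{R}}\bar\gamma_{\mathrm{E}}(1+1/\alpha)>0$.
   Context: $\mathcal{CN}(0,1)$ denotes a circularly symmetric complex Gaussian random variable with zero mean and unit variance (Rayleigh fading). The quantities model a decode-and-forward relay system where the eavesdropper overhears both source and relay; $\bar\gamma$'s are average SNRs, $\mathcal{R}_3$ the secrecy capacity and $\mathcal{P}_3$ the secrecy outage probability. *)

theory Defs
  imports "HOL-Probability.Probability"
begin

definition cn01_density :: "complex \<Rightarrow> ennreal" where
  "cn01_density z = ennreal (exp (- (cmod z)\<^sup>2) / pi)"

definition hop_rate :: "real \<Rightarrow> real \<Rightarrow> complex \<Rightarrow> complex \<Rightarrow> real" where
  "hop_rate g gE h hE = log 2 ((1 + g * (cmod h)\<^sup>2) / (1 + gE * (cmod hE)\<^sup>2))"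

definition R3 :: "real \<Rightarrow> real \<Rightarrow> real \<Rightarrow> complex \<Rightarrow> complex \<Rightarrow> complex \<Rightarrow> complex \<Rightarrow> real" where
  "R3 \<alpha> gD gE hSR hRD hSE hRE =
     max (min (hop_rate (\<alpha> * gD) gE hSR hSE) (hop_rate gD gE hRD hRE)) 0"

definition M3 :: "real \<Rightarrow> real \<Rightarrow> real \<Rightarrow> real" where
  "M3 \<alpha> gE Rt = (2 powr Rt - 1) * (1 + 1 / \<alpha>) + 2 powr Rt * gE * (1 + 1 / \<alpha>)"

end

theory Submission
  imports Defs "HOL-Real_Asymp.Real_Asymp"
begin

lemma norm_le_sqrt_iff: "cmod z \<le> sqrt t \<longleftrightarrow> (cmod z)\<^sup>2 \<le> t"
  by (metis real_sqrt_le_iff real_sqrt_abs abs_norm_cancel)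

lemma cball_sq: "0 \<le> t \<Longrightarrow> {z::complex. (cmod z)\<^sup>2 \<le> t} = cball 0 (sqrt t)"
  by (rule set_eqI) (simp only: mem_Collect_eq mem_cball_0 norm_le_sqrt_iff)

lemma emeasure_cball_complex: "0 \<le> r \<Longrightarrow> emeasure lborel (cball (0::complex) r) = ennreal (pi * r^2)"
  by (simp add: emeasure_cball unit_ball_vol_2)

definition Gn :: "real \<Rightarrow> ennreal" where
  "Gn t = (\<integral>\<^sup>+z. ennreal (exp (- (cmod z)\<^sup>2) / pi) * indicator (cball (0::complex) (sqrt t)) z \<partial>lborel)"

lemma Gn0: "Gn 0 = 0"
  unfolding Gn_def by simp

lemma ann_measure:
  assumes "0 \<le> t" "t \<le> t'"
  shows "emeasure lborel (cball (0::complex) (sqrt t') - cball 0 (sqrt t)) = ennreal (pi * (t' - t))"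
proof -
  have sub: "cball (0::complex) (sqrt t) \<subseteq> cball 0 (sqrt t')"
    using assms by (intro subset_cball real_sqrt_le_mono)
  have "emeasure lborel (cball (0::complex) (sqrt t') - cball 0 (sqrt t)) =
     emeasure lborel (cball (0::complex) (sqrt t')) - emeasure lborel (cball (0::complex) (sqrt t))"
    using sub assms by (intro emeasure_Diff) (auto simp: emeasure_cball_complex)
  also have "\<dots> = ennreal (pi * t') - ennreal (pi * t)"
    using assms by (simp add: emeasure_cball_complex)
  also have "\<dots> = ennreal (pi * (t' - t))"
    using assms by (subst ennreal_minus) (auto simp: algebra_simps)
  finally show ?thesis .
qed

lemma ann_bounds:
  assumes "0 \<le> t" "t \<le> t'"
  defines "A \<equiv> cball (0::complex) (sqrt t') - cball 0 (sqrt t)"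
  shows "ennreal (exp (-t') * (t' - t)) \<le> (\<integral>\<^sup>+z. ennreal (exp (- (cmod z)\<^sup>2) / pi) * indicator A z \<partial>lborel)"
    and "(\<integral>\<^sup>+z. ennreal (exp (- (cmod z)\<^sup>2) / pi) * indicator A z \<partial>lborel) \<le> ennreal (exp (-t) * (t' - t))"
proof -
  have mA: "emeasure lborel A = ennreal (pi * (t' - t))"
    unfolding A_def using ann_measure[OF assms(1,2)] .
  have inA: "t < (cmod z)\<^sup>2 \<and> (cmod z)\<^sup>2 \<le> t'" if "z \<in> A" for z
  proof -
    have "cmod z \<le> sqrt t'" "\<not> cmod z \<le> sqrt t" using that by (auto simp: A_def)
    then show ?thesis unfolding norm_le_sqrt_iff by simp
  qed
  have A_sets[measurable]: "A \<in> sets lborel" unfolding A_def by simp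
  have cst: "(\<integral>\<^sup>+z. ennreal (c / pi) * indicator A z \<partial>lborel) = ennreal (c * (t' - t))" if "0 \<le> c" for c
  proof -
    have "(\<integral>\<^sup>+z. ennreal (c / pi) * indicator A z \<partial>lborel) = ennreal (c / pi) * ennreal (pi * (t' - t))"
      using A_sets by (subst nn_integral_cmult_indicator) (auto simp: mA)
    also have "\<dots> = ennreal (c * (t' - t))"
      using assms(1,2) that by (subst ennreal_mult[symmetric]) auto
    finally show ?thesis .
  qed
  have "(\<integral>\<^sup>+z. ennreal (exp (-t') / pi) * indicator A z \<partial>lborel) \<le>
        (\<integral>\<^sup>+z. ennreal (exp (- (cmod z)\<^sup>2) / pi) * indicator A z \<partial>lborel)"
    apply (intro nn_integral_mono)
    subgoal for z by (cases "z \<in> A") (auto dest!: inA intro!: ennreal_leI divide_right_mono)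
    done
  moreover have "(\<integral>\<^sup>+z. ennreal (exp (-t') / pi) * indicator A z \<partial>lborel) = ennreal (exp (-t') * (t' - t))"
    by (rule cst) simp
  ultimately show "ennreal (exp (-t') * (t' - t)) \<le> (\<integral>\<^sup>+z. ennreal (exp (- (cmod z)\<^sup>2) / pi) * indicator A z \<partial>lborel)"
    by simp
  have "(\<integral>\<^sup>+z. ennreal (exp (- (cmod z)\<^sup>2) / pi) * indicator A z \<partial>lborel) \<le>
        (\<integral>\<^sup>+z. ennreal (exp (-t) / pi) * indicator A z \<partial>lborel)"
    apply (intro nn_integral_mono)
    subgoal for z by (cases "z \<in> A") (auto dest!: inA intro!: ennreal_leI divide_right_mono)
    done
  moreover have "(\<integral>\<^sup>+z. ennreal (exp (-t) / pi) * indicator A z \<partial>lborel) = ennreal (exp (-t) * (t' - t))"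
    by (rule cst) simp
  ultimately show "(\<integral>\<^sup>+z. ennreal (exp (- (cmod z)\<^sup>2) / pi) * indicator A z \<partial>lborel) \<le> ennreal (exp (-t) * (t' - t))"
    by simp
qed

definition Ann :: "real \<Rightarrow> real \<Rightarrow> ennreal" where
  "Ann t t' = (\<integral>\<^sup>+z. ennreal (exp (- (cmod z)\<^sup>2) / pi) * indicator (cball (0::complex) (sqrt t') - cball 0 (sqrt t)) z \<partial>lborel)"

lemma Gn_split:
  assumes "0 \<le> t" "t \<le> t'"
  shows "Gn t' = Gn t + Ann t t'"
proof -
  have sub: "cball (0::complex) (sqrt t) \<subseteq> cball 0 (sqrt t')"
    using assms by (intro subset_cball real_sqrt_le_mono)
  have "Gn t' = (\<integral>\<^sup>+z. ennreal (exp (- (cmod z)\<^sup>2) / pi) * indicator (cball (0::complex) (sqrt t)) z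
      + ennreal (exp (- (cmod z)\<^sup>2) / pi) * indicator (cball (0::complex) (sqrt t') - cball 0 (sqrt t)) z \<partial>lborel)"
    unfolding Gn_def
    apply (intro nn_integral_cong)
    subgoal for z using sub by (cases "z \<in> cball 0 (sqrt t)"; cases "z \<in> cball 0 (sqrt t')") auto
    done
  also have "\<dots> = Gn t + Ann t t'"
    unfolding Gn_def Ann_def by (intro nn_integral_add) (measurable, simp add: borel_closed)+
  finally show ?thesis .
qed

lemma Ann_bounds:
  assumes "0 \<le> t" "t \<le> t'"
  shows "ennreal (exp (-t') * (t' - t)) \<le> Ann t t'" "Ann t t' \<le> ennreal (exp (-t) * (t' - t))"
  using ann_bounds[OF assms] unfolding Ann_def by auto

lemma Gn_fin: "0 \<le> t \<Longrightarrow> Gn t \<noteq> \<top>"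
  using Gn_split[of 0 t] Ann_bounds(2)[of 0 t] Gn0
  by (metis add_0 ennreal_neq_top neq_top_trans order_refl)

lemma Ann_fin: "0 \<le> t \<Longrightarrow> t \<le> t' \<Longrightarrow> Ann t t' \<noteq> \<top>"
  using Ann_bounds(2)[of t t'] by (metis ennreal_neq_top neq_top_trans)

lemma g_bounds:
  assumes "0 \<le> t" "t \<le> t'"
  shows "exp (-t') * (t' - t) \<le> enn2real (Gn t') - enn2real (Gn t)"
    "enn2real (Gn t') - enn2real (Gn t) \<le> exp (-t) * (t' - t)"
proof -
  have e: "enn2real (Gn t') - enn2real (Gn t) = enn2real (Ann t t')"
    using Gn_split[OF assms] Gn_fin[OF assms(1)] Ann_fin[OF assms]
    by (simp add: enn2real_plus top.not_eq_extremum)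
  have a: "Ann t t' = ennreal (enn2real (Ann t t'))"
    using Ann_fin[OF assms] by (simp add: ennreal_enn2real_if)
  show "exp (-t') * (t' - t) \<le> enn2real (Gn t') - enn2real (Gn t)"
    using Ann_bounds(1)[OF assms] a e assms
    by (metis ennreal_le_iff enn2real_nonneg)
  show "enn2real (Gn t') - enn2real (Gn t) \<le> exp (-t) * (t' - t)"
    using Ann_bounds(2)[OF assms] a e assms
    by (metis ennreal_le_iff2 enn2real_nonneg mult_nonneg_nonneg exp_ge_zero diff_ge_0_iff_ge order.strict_iff_not ennreal_le_iff)
qed

lemma quad_const:
  fixes H :: "real \<Rightarrow> real"
  assumes H: "\<And>x y. 0 \<le> x \<Longrightarrow> x \<le> y \<Longrightarrow> \<bar>H y - H x\<bar> \<le> (y - x)\<^sup>2"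
    and T: "0 \<le> T"
  shows "H T = H 0"
proof (rule ccontr)
  assume ne: "H T \<noteq> H 0"
  define d where "d = \<bar>H T - H 0\<bar>"
  have d: "d > 0" using ne by (simp add: d_def)
  obtain n :: nat where n: "T\<^sup>2 / d < real n" using reals_Archimedean2 by blast
  have npos: "n > 0" using n d by (metis not_gr0 of_nat_0 divide_nonneg_pos zero_le_power2 not_less)
  define f where "f i = H (T * real i / real n)" for i :: nat
  have "(\<Sum>i<n. f (Suc i) - f i) = f n - f 0" by (rule sum_lessThan_telescope)
  also have "f n = H T" using npos by (simp add: f_def)
  also have "f 0 = H 0" by (simp add: f_def)
  finally have tel: "H T - H 0 = (\<Sum>i<n. f (Suc i) - f i)" by simp
  have step: "\<bar>f (Suc i) - f i\<bar> \<le> (T / real n)\<^sup>2" for i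
  proof -
    have "\<bar>f (Suc i) - f i\<bar> \<le> (T * real (Suc i) / real n - T * real i / real n)\<^sup>2"
      unfolding f_def using T npos by (intro H) (auto intro!: divide_right_mono mult_left_mono)
    also have "T * real (Suc i) / real n - T * real i / real n = T / real n"
      by (simp add: diff_divide_distrib[symmetric] algebra_simps)
    finally show ?thesis .
  qed
  have "d \<le> (\<Sum>i<n. \<bar>f (Suc i) - f i\<bar>)"
    unfolding d_def tel by (rule sum_abs)
  also have "\<dots> \<le> (\<Sum>i<n. (T / real n)\<^sup>2)"
    by (intro sum_mono step)
  also have "\<dots> = T\<^sup>2 / real n"
    using npos by (simp add: power2_eq_square field_simps)
  finally have "d \<le> T\<^sup>2 / real n" .
  then have "d * real n \<le> T\<^sup>2" using npos by (simp add: field_simps)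
  moreover have "T\<^sup>2 < d * real n" using n d by (simp add: field_simps)
  ultimately show False by simp
qed

lemma exp_diff_bounds:
  fixes t t' :: real
  assumes "t \<le> t'"
  shows "exp (-t') * (t' - t) \<le> exp (-t) - exp (-t')" "exp (-t) - exp (-t') \<le> exp (-t) * (t' - t)"
proof -
  define u where "u = t' - t"
  have u: "u \<ge> 0" unfolding u_def using assms by linarith
  have e: "exp (-t') = exp (-t) * exp (-u)" by (simp add: u_def flip: exp_add)
  have 1: "1 - exp (-u) \<le> u" using exp_ge_add_one_self[of "-u"] by simp
  have 2: "exp (-u) * u \<le> 1 - exp (-u)"
  proof -
    have "1 + u \<le> exp u" by (rule exp_ge_add_one_self)
    then have "exp (-u) * (1 + u) \<le> exp (-u) * exp u" by (intro mult_left_mono) auto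
    then show ?thesis by (simp add: exp_minus field_simps)
  qed
  show "exp (-t') * (t' - t) \<le> exp (-t) - exp (-t')"
    using mult_left_mono[OF 2, of "exp (-t)"] by (simp add: e u_def[symmetric] algebra_simps)
  show "exp (-t) - exp (-t') \<le> exp (-t) * (t' - t)"
    using mult_left_mono[OF 1, of "exp (-t)"] by (simp add: e u_def[symmetric] algebra_simps)
qed

lemma Gn_eq:
  assumes "0 \<le> T"
  shows "Gn T = ennreal (1 - exp (-T))"
proof -
  define H where "H t = enn2real (Gn t) - (1 - exp (-t))" for t
  have "\<bar>H y - H x\<bar> \<le> (y - x)\<^sup>2" if "0 \<le> x" "x \<le> y" for x y
  proof -
    have b1: "exp (-y) * (y - x) \<le> enn2real (Gn y) - enn2real (Gn x)"
      and b2: "enn2real (Gn y) - enn2real (Gn x) \<le> exp (-x) * (y - x)"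
      using g_bounds[OF that] by auto
    have c1: "exp (-y) * (y - x) \<le> exp (-x) - exp (-y)" and c2: "exp (-x) - exp (-y) \<le> exp (-x) * (y - x)"
      using exp_diff_bounds[OF that(2)] by auto
    have "\<bar>H y - H x\<bar> \<le> exp (-x) * (y - x) - exp (-y) * (y - x)"
      using b1 b2 c1 c2 unfolding H_def by (simp add: abs_le_iff)
    also have "\<dots> = (exp (-x) - exp (-y)) * (y - x)" by (simp add: algebra_simps)
    also have "\<dots> \<le> (exp (-x) * (y - x)) * (y - x)"
      using c2 that by (intro mult_right_mono) auto
    also have "\<dots> \<le> 1 * (y - x) * (y - x)"
      using that by (intro mult_right_mono) auto
    finally show ?thesis by (simp add: power2_eq_square)
  qed
  then have "H T = H 0" using assms by (intro quad_const) auto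
  then have "enn2real (Gn T) = 1 - exp (-T)" by (simp add: H_def Gn0)
  then show ?thesis using Gn_fin[OF assms] by (metis ennreal_enn2real_if)
qed

lemma exp_tail:
  assumes "0 \<le> u"
  shows "(\<integral>\<^sup>+x. ennreal (exponential_density 1 x) * indicator {u..} x \<partial>lborel) = ennreal (exp (-u))"
proof -
  have "(\<integral>\<^sup>+x. ennreal (exponential_density 1 x) * indicator {u..} x \<partial>lborel) = ennreal (0 - (- exp (-u)))"
  proof (rule nn_integral_FTC_atLeast)
    show "exponential_density 1 \<in> borel_measurable borel" by simp
    fix x assume "u \<le> x"
    then have "exponential_density 1 x = exp (-x)" using assms by (simp add: exponential_density_def)
    then show "((\<lambda>x. - exp (-x)) has_real_derivative exponential_density 1 x) (at x)"
      by (auto intro!: derivative_eq_intros)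
    show "0 \<le> exponential_density 1 x" by (simp add: exponential_density_def)
  next
    show "((\<lambda>x::real. - exp (-x)) \<longlongrightarrow> 0) at_top"
      by real_asymp
  qed
  then show ?thesis by simp
qed

lemma laplace_int:
  assumes g: "0 < g" and a: "0 \<le> a" and b: "0 \<le> b"
  shows "(\<integral>\<^sup>+y. ennreal (exponential_density 1 y * exp (-(a + b*y)/g)) * indicator {0..} y \<partial>lborel)
     = ennreal (exp (-a/g) / (1 + b/g))"
proof -
  define k where "k = 1 + b/g"
  have "0 \<le> b / g" using g b by simp
  then have k: "0 < k" by (simp add: k_def)
  define C where "C = exp (-a/g) / k"
  have "(\<integral>\<^sup>+y. ennreal (exponential_density 1 y * exp (-(a + b*y)/g)) * indicator {0..} y \<partial>lborel)
     = ennreal (0 - (- C * exp (- k * 0)))"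
  proof (rule nn_integral_FTC_atLeast)
    show "(\<lambda>y. exponential_density 1 y * exp (-(a + b*y)/g)) \<in> borel_measurable borel" by simp
    fix x :: real assume x: "0 \<le> x"
    have ck: "C * k = exp (-a/g)" using k by (simp add: C_def)
    have ex: "-x + (-(a+b*x)/g) = -a/g + (-k*x)" using g by (simp add: k_def field_simps)
    have "exponential_density 1 x * exp (-(a + b*x)/g) = exp (-x + (-(a+b*x)/g))"
      using x by (simp add: exponential_density_def exp_add[symmetric])
    also have "\<dots> = exp (-a/g) * exp (- k * x)" unfolding ex by (rule exp_add)
    finally have e: "exponential_density 1 x * exp (-(a + b*x)/g) = C * k * exp (- k * x)"
      using ck by simp
    show "((\<lambda>y. - C * exp (- k * y)) has_real_derivative exponential_density 1 x * exp (-(a + b*x)/g)) (at x)"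
      unfolding e by (auto intro!: derivative_eq_intros)
    show "0 \<le> exponential_density 1 x * exp (-(a + b*x)/g)"
      by (simp add: exponential_density_def)
  next
    show "((\<lambda>y::real. - C * exp (- k * y)) \<longlongrightarrow> 0) at_top"
      using k by real_asymp
  qed
  then show ?thesis by (simp add: C_def k_def)
qed

lemma L2:
  fixes X Y :: "'a \<Rightarrow> real"
  assumes P: "prob_space M"
    and dX: "distributed M lborel X (exponential_density 1)"
    and dY: "distributed M lborel Y (exponential_density 1)"
    and ind: "prob_space.indep_var M borel Y borel X"
    and g: "0 < g" and a: "0 \<le> a" and b: "0 \<le> b"
  shows "measure M {\<omega>\<in>space M. g * X \<omega> < a + b * Y \<omega>} = 1 - exp (-a/g) / (1 + b/g)"
proof -
  interpret prob_space M by fact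
  define E where "E = density lborel (exponential_density 1)"
  have PE: "prob_space E" unfolding E_def by (rule prob_space_exponential_density) simp
  interpret E: prob_space E by (rule PE)
  have Xm[measurable]: "X \<in> borel_measurable M" using distributed_measurable[OF dX] by simp
  have Ym[measurable]: "Y \<in> borel_measurable M" using distributed_measurable[OF dY] by simp
  have DX: "distr M borel X = E"
  proof -
    have "distr M borel X = distr M lborel X" by (rule distr_cong) auto
    also have "\<dots> = E" using distributed_distr_eq_density[OF dX] by (simp add: E_def)
    finally show ?thesis .
  qed
  have DY: "distr M borel Y = E"
  proof -
    have "distr M borel Y = distr M lborel Y" by (rule distr_cong) auto
    also have "\<dots> = E" using distributed_distr_eq_density[OF dY] by (simp add: E_def)
    finally show ?thesis .
  qed
  have J: "distr M (borel \<Otimes>\<^sub>M borel) (\<lambda>\<omega>. (Y \<omega>, X \<omega>)) = E \<Otimes>\<^sub>M E"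
    using ind unfolding indep_var_distribution_eq by (simp add: DX DY)
  define S where "S = {p::real\<times>real. a + b * fst p \<le> g * snd p}"
  have S[measurable]: "S \<in> sets (borel \<Otimes>\<^sub>M borel)"
  proof -
    have "S = {p\<in>space (borel \<Otimes>\<^sub>M borel). a + b * fst p \<le> g * snd p}"
      by (auto simp: S_def space_pair_measure)
    also have "\<dots> \<in> sets (borel \<Otimes>\<^sub>M borel)" by measurable
    finally show ?thesis .
  qed
  have SE: "S \<in> sets (E \<Otimes>\<^sub>M E)" using S by (simp add: E_def)
  have SE2: "S \<in> sets (borel \<Otimes>\<^sub>M E)" using S
    by (subst sets_pair_measure_cong[of _ borel _ borel]) (auto simp: E_def)
  have SE3: "S \<in> sets (lborel \<Otimes>\<^sub>M E)" using S
    by (subst sets_pair_measure_cong[of _ borel _ borel]) (auto simp: E_def)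
  have slice: "emeasure E (Pair y -` S) = ennreal (exp (-(a + b*y)/g))" if "0 \<le> y" for y
  proof -
    have "Pair y -` S = {(a+b*y)/g ..}" using g by (auto simp: S_def field_simps)
    then have "emeasure E (Pair y -` S) = (\<integral>\<^sup>+x. ennreal (exponential_density 1 x) * indicator {(a+b*y)/g ..} x \<partial>lborel)"
      by (simp add: E_def emeasure_density)
    also have "\<dots> = ennreal (exp (- ((a+b*y)/g)))"
      using that a b g by (intro exp_tail) simp
    finally show ?thesis by (simp add: minus_divide_left)
  qed
  have "emeasure (E \<Otimes>\<^sub>M E) S = (\<integral>\<^sup>+y. emeasure E (Pair y -` S) \<partial>E)"
    using SE by (rule E.emeasure_pair_measure_alt)
  also have "\<dots> = (\<integral>\<^sup>+y. ennreal (exponential_density 1 y) * emeasure E (Pair y -` S) \<partial>lborel)"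
    unfolding E_def by (subst nn_integral_density) (auto intro!: E.measurable_emeasure_Pair SE2 SE3 simp flip: E_def)
  also have "\<dots> = (\<integral>\<^sup>+y. ennreal (exponential_density 1 y * exp (-(a + b*y)/g)) * indicator {0..} y \<partial>lborel)"
    apply (intro nn_integral_cong)
    subgoal for y by (cases "0 \<le> y") (auto simp: slice ennreal_mult exponential_density_def)
    done
  also have "\<dots> = ennreal (exp (-a/g) / (1 + b/g))"
    using g a b by (rule laplace_int)
  finally have eS: "emeasure (E \<Otimes>\<^sub>M E) S = ennreal (exp (-a/g) / (1 + b/g))" .
  have "measure M {\<omega>\<in>space M. a + b * Y \<omega> \<le> g * X \<omega>} = measure (distr M (borel \<Otimes>\<^sub>M borel) (\<lambda>\<omega>. (Y \<omega>, X \<omega>))) S"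
  proof -
    have "{\<omega>\<in>space M. a + b * Y \<omega> \<le> g * X \<omega>} = (\<lambda>\<omega>. (Y \<omega>, X \<omega>)) -` S \<inter> space M"
      by (auto simp: S_def)
    also have "measure M \<dots> = measure (distr M (borel \<Otimes>\<^sub>M borel) (\<lambda>\<omega>. (Y \<omega>, X \<omega>))) S"
      by (rule measure_distr[symmetric]) (auto intro: S)
    finally show ?thesis .
  qed
  also have "\<dots> = exp (-a/g) / (1 + b/g)"
    unfolding J measure_def eS using g b by simp
  finally have c: "measure M {\<omega>\<in>space M. a + b * Y \<omega> \<le> g * X \<omega>} = exp (-a/g) / (1 + b/g)" .
  have "{\<omega>\<in>space M. g * X \<omega> < a + b * Y \<omega>} = space M - {\<omega>\<in>space M. a + b * Y \<omega> \<le> g * X \<omega>}"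
    by auto
  then have "measure M {\<omega>\<in>space M. g * X \<omega> < a + b * Y \<omega>} = 1 - measure M {\<omega>\<in>space M. a + b * Y \<omega> \<le> g * X \<omega>}"
    by (simp add: prob_compl)
  then show ?thesis using c by simp
qed

lemma cn01_meas[measurable]: "cn01_density \<in> borel_measurable borel"
  unfolding cn01_density_def[abs_def] by measurable

lemma cn_exp:
  assumes P: "prob_space M" and d: "distributed M lborel h cn01_density"
  shows "distributed M lborel (\<lambda>\<omega>. (cmod (h \<omega>))\<^sup>2) (exponential_density 1)"
proof -
  have hm[measurable]: "h \<in> borel_measurable M" using distributed_measurable[OF d] by simp
  have D: "distr M lborel h = density lborel cn01_density"
    using distributed_distr_eq_density[OF d] .
  show ?thesis
  proof (rule exponential_distributedI)
    show "(\<lambda>\<omega>. (cmod (h \<omega>))\<^sup>2) \<in> borel_measurable M" by measurable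
    fix a :: real assume a: "0 \<le> a"
    have "{x \<in> space M. (cmod (h x))\<^sup>2 \<le> a} = h -` cball 0 (sqrt a) \<inter> space M"
      using cball_sq[OF a] by auto
    then have "emeasure M {x \<in> space M. (cmod (h x))\<^sup>2 \<le> a} = emeasure (distr M lborel h) (cball 0 (sqrt a))"
      by (subst emeasure_distr) auto
    also have "\<dots> = Gn a"
      unfolding D Gn_def by (subst emeasure_density) (auto simp: cn01_density_def)
    also have "\<dots> = ennreal (1 - exp (-a))" using Gn_eq[OF a] .
    finally have "emeasure M {x \<in> space M. (cmod (h x))\<^sup>2 \<le> a} = ennreal (1 - exp (-a))" .
    then show "emeasure M {x \<in> space M. (cmod (h x))\<^sup>2 \<le> a} = 1 - ennreal (exp (- a * 1))"
      by (simp add: ennreal_minus ennreal_1[symmetric] del: ennreal_1)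
  qed simp
qed

lemma lim_main:
  fixes a b \<alpha> :: real
  assumes "0 < a" "0 < b" "0 < \<alpha>"
  shows "((\<lambda>x. x * ((1 - exp (-a/(\<alpha>*x)) / (1 + b/(\<alpha>*x))) + (1 - exp (-a/x) / (1 + b/x))
     - (1 - exp (-a/(\<alpha>*x)) / (1 + b/(\<alpha>*x))) * (1 - exp (-a/x) / (1 + b/x)))) \<longlongrightarrow> (a + b) * (1 + 1/\<alpha>)) at_top"
proof -
  have "((\<lambda>x. x * ((1 - exp (-a/(\<alpha>*x)) / (1 + b/(\<alpha>*x))) + (1 - exp (-a/x) / (1 + b/x))
     - (1 - exp (-a/(\<alpha>*x)) / (1 + b/(\<alpha>*x))) * (1 - exp (-a/x) / (1 + b/x)))) \<longlongrightarrow> a * inverse \<alpha> + b * inverse \<alpha> + (a + b)) at_top"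
    using assms by real_asymp
  moreover have "a * inverse \<alpha> + b * inverse \<alpha> + (a + b) = (a + b) * (1 + 1/\<alpha>)"
    by (simp add: divide_inverse algebra_simps)
  ultimately show ?thesis by simp
qed

lemma hop_lt_iff:
  assumes "0 \<le> g" "0 \<le> gE"
  shows "hop_rate g gE h hE < Rt \<longleftrightarrow> g * (cmod h)\<^sup>2 < (2 powr Rt - 1) + (2 powr Rt * gE) * (cmod hE)\<^sup>2"
proof -
  define N where "N = 1 + g * (cmod h)\<^sup>2"
  define D where "D = 1 + gE * (cmod hE)\<^sup>2"
  have N: "N > 0" using assms by (simp add: N_def add_pos_nonneg)
  have D: "D > 0" using assms by (simp add: D_def add_pos_nonneg)
  have "hop_rate g gE h hE < Rt \<longleftrightarrow> log 2 (N / D) < Rt" by (simp add: hop_rate_def N_def D_def)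
  also have "\<dots> \<longleftrightarrow> 2 powr (log 2 (N / D)) < 2 powr Rt" by simp
  also have "2 powr (log 2 (N / D)) = N / D" using N D by simp
  also have "N / D < 2 powr Rt \<longleftrightarrow> N < 2 powr Rt * D" using D by (simp add: divide_less_eq)
  also have "\<dots> \<longleftrightarrow> g * (cmod h)\<^sup>2 < (2 powr Rt - 1) + (2 powr Rt * gE) * (cmod hE)\<^sup>2"
    by (simp add: N_def D_def algebra_simps)
  finally show ?thesis .
qed

lemma (in prob_space) indep_var_from_vars:
  assumes "indep_vars M' X I" "i \<in> I" "j \<in> I" "i \<noteq> j"
  shows "indep_var (M' i) (X i) (M' j) (X j)"
proof -
  have "indep_var (PiM {i} M') (\<lambda>\<omega>. restrict (\<lambda>k. X k \<omega>) {i}) (PiM {j} M') (\<lambda>\<omega>. restrict (\<lambda>k. X k \<omega>) {j})"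
    using assms by (intro indep_var_restrict) auto
  then have "indep_var (M' i) ((\<lambda>f. f i) \<circ> (\<lambda>\<omega>. restrict (\<lambda>k. X k \<omega>) {i})) (M' j) ((\<lambda>f. f j) \<circ> (\<lambda>\<omega>. restrict (\<lambda>k. X k \<omega>) {j}))"
    by (rule indep_var_compose) (auto intro: measurable_component_singleton)
  then show ?thesis by (simp add: comp_def)
qed

lemma (in prob_space) indep_var_pairs:
  assumes "indep_vars (\<lambda>_. borel) X I" "i \<in> I" "j \<in> I" "k \<in> I" "l \<in> I" "{i, j} \<inter> {k, l} = {}"
  shows "indep_var (borel \<Otimes>\<^sub>M borel) (\<lambda>\<omega>. (X i \<omega>, X j \<omega>)) (borel \<Otimes>\<^sub>M borel) (\<lambda>\<omega>. (X k \<omega>, X l \<omega>))"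
proof -
  have "indep_var (PiM {i, j} (\<lambda>_. borel)) (\<lambda>\<omega>. restrict (\<lambda>m. X m \<omega>) {i, j}) (PiM {k, l} (\<lambda>_. borel)) (\<lambda>\<omega>. restrict (\<lambda>m. X m \<omega>) {k, l})"
    using assms by (intro indep_var_restrict) auto
  then have "indep_var (borel \<Otimes>\<^sub>M borel) ((\<lambda>f. (f i, f j)) \<circ> (\<lambda>\<omega>. restrict (\<lambda>m. X m \<omega>) {i, j}))
     (borel \<Otimes>\<^sub>M borel) ((\<lambda>f. (f k, f l)) \<circ> (\<lambda>\<omega>. restrict (\<lambda>m. X m \<omega>) {k, l}))"
    by (rule indep_var_compose) (auto intro!: measurable_Pair measurable_component_singleton)
  then show ?thesis by (simp add: comp_def)
qed

theorem theorem8: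
  fixes M :: "'a measure"
    and hSR hRD hSE hRE :: "'a \<Rightarrow> complex"
    and gE Rt \<alpha> :: real
  assumes "prob_space M"
    and "gE > 0" and "Rt > 0" and "\<alpha> > 0"
    and "distributed M lborel hSR cn01_density"
    and "distributed M lborel hRD cn01_density"
    and "distributed M lborel hSE cn01_density"
    and "distributed M lborel hRE cn01_density"
    and "prob_space.indep_vars M (\<lambda>_. borel) (\<lambda>i. [hSR, hRD, hSE, hRE] ! i) {0..<4}"
  shows "M3 \<alpha> gE Rt > 0 \<and>
    ((\<lambda>gD. gD * measure M {\<omega> \<in> space M. R3 \<alpha> gD gE (hSR \<omega>) (hRD \<omega>) (hSE \<omega>) (hRE \<omega>) < Rt})
       \<longlongrightarrow> M3 \<alpha> gE Rt) at_top"
proof -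
  interpret prob_space M by fact
  define c where "c = 2 powr Rt"
  define a where "a = c - 1"
  define b where "b = c * gE"
  have c1: "1 < c" unfolding c_def using assms(3) by simp
  have a0: "0 < a" using c1 by (simp add: a_def)
  have b0: "0 < b" using c1 assms(2) by (simp add: b_def)
  have M3eq: "M3 \<alpha> gE Rt = (a + b) * (1 + 1/\<alpha>)"
    by (simp add: M3_def a_def b_def c_def algebra_simps)
  have "0 < 1 + 1/\<alpha>" using assms(4) by (simp add: add_pos_pos)
  then have M3pos: "M3 \<alpha> gE Rt > 0" using a0 b0 unfolding M3eq by simp
  define p where "p g = 1 - exp (-a/g) / (1 + b/g)" for g
  have iv: "indep_vars (\<lambda>_. borel) (\<lambda>i. [hSR, hRD, hSE, hRE] ! i) {0..<4}" using assms(9) .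
  have ind1: "indep_var borel hSE borel hSR" using indep_var_from_vars[OF iv, of 2 0] by simp
  have ind2: "indep_var borel hRE borel hRD" using indep_var_from_vars[OF iv, of 3 1] by simp
  have indP: "indep_var (borel \<Otimes>\<^sub>M borel) (\<lambda>\<omega>. (hSR \<omega>, hSE \<omega>)) (borel \<Otimes>\<^sub>M borel) (\<lambda>\<omega>. (hRD \<omega>, hRE \<omega>))"
    using indep_var_pairs[OF iv, of 0 2 1 3] by simp
  have sq[measurable]: "(\<lambda>z::complex. (cmod z)\<^sup>2) \<in> borel_measurable borel" by measurable
  have ind1': "indep_var borel (\<lambda>\<omega>. (cmod (hSE \<omega>))\<^sup>2) borel (\<lambda>\<omega>. (cmod (hSR \<omega>))\<^sup>2)"
    using indep_var_compose[OF ind1 sq sq] by (simp add: comp_def)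
  have ind2': "indep_var borel (\<lambda>\<omega>. (cmod (hRE \<omega>))\<^sup>2) borel (\<lambda>\<omega>. (cmod (hRD \<omega>))\<^sup>2)"
    using indep_var_compose[OF ind2 sq sq] by (simp add: comp_def)
  have eSR: "distributed M lborel (\<lambda>\<omega>. (cmod (hSR \<omega>))\<^sup>2) (exponential_density 1)"
    using cn_exp[OF assms(1,5)] .
  have eRD: "distributed M lborel (\<lambda>\<omega>. (cmod (hRD \<omega>))\<^sup>2) (exponential_density 1)"
    using cn_exp[OF assms(1,6)] .
  have eSE: "distributed M lborel (\<lambda>\<omega>. (cmod (hSE \<omega>))\<^sup>2) (exponential_density 1)"
    using cn_exp[OF assms(1,7)] .
  have eRE: "distributed M lborel (\<lambda>\<omega>. (cmod (hRE \<omega>))\<^sup>2) (exponential_density 1)"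
    using cn_exp[OF assms(1,8)] .
  have [measurable]: "hSR \<in> borel_measurable M" using distributed_measurable[OF assms(5)] by simp
  have [measurable]: "hRD \<in> borel_measurable M" using distributed_measurable[OF assms(6)] by simp
  have [measurable]: "hSE \<in> borel_measurable M" using distributed_measurable[OF assms(7)] by simp
  have [measurable]: "hRE \<in> borel_measurable M" using distributed_measurable[OF assms(8)] by simp
  have hop: "hop_rate g gE h hE < Rt \<longleftrightarrow> g * (cmod h)\<^sup>2 < a + b * (cmod hE)\<^sup>2" if "0 \<le> g" for g h hE
    using hop_lt_iff[OF that, of gE h hE Rt] assms(2) by (simp add: a_def b_def c_def)
  have Sm: "{q::complex\<times>complex. hop_rate g gE (fst q) (snd q) < Rt} \<in> sets (borel \<Otimes>\<^sub>M borel)" for g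
  proof -
    have "{q::complex\<times>complex. hop_rate g gE (fst q) (snd q) < Rt} =
        {q\<in>space (borel \<Otimes>\<^sub>M borel). hop_rate g gE (fst q) (snd q) < Rt}"
      by (auto simp: space_pair_measure)
    also have "\<dots> \<in> sets (borel \<Otimes>\<^sub>M borel)" unfolding hop_rate_def by measurable
    finally show ?thesis .
  qed
  have main: "measure M {\<omega> \<in> space M. R3 \<alpha> g gE (hSR \<omega>) (hRD \<omega>) (hSE \<omega>) (hRE \<omega>) < Rt}
      = p (\<alpha>*g) + p g - p (\<alpha>*g) * p g" if g: "0 < g" for g
  proof -
    define S1 where "S1 = {q::complex\<times>complex. hop_rate (\<alpha>*g) gE (fst q) (snd q) < Rt}"
    define S2 where "S2 = {q::complex\<times>complex. hop_rate g gE (fst q) (snd q) < Rt}"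
    have S1m: "S1 \<in> sets (borel \<Otimes>\<^sub>M borel)" unfolding S1_def by (rule Sm)
    have S2m: "S2 \<in> sets (borel \<Otimes>\<^sub>M borel)" unfolding S2_def by (rule Sm)
    define B1 where "B1 = (\<lambda>\<omega>. (hSR \<omega>, hSE \<omega>)) -` S1 \<inter> space M"
    define B2 where "B2 = (\<lambda>\<omega>. (hRD \<omega>, hRE \<omega>)) -` S2 \<inter> space M"
    have B1m: "B1 \<in> events" unfolding B1_def by (rule measurable_sets[OF _ S1m]) measurable
    have B2m: "B2 \<in> events" unfolding B2_def by (rule measurable_sets[OF _ S2m]) measurable
    have ag: "0 \<le> \<alpha> * g" using g assms(4) by simp
    have B1e: "B1 = {\<omega>\<in>space M. (\<alpha>*g) * (cmod (hSR \<omega>))\<^sup>2 < a + b * (cmod (hSE \<omega>))\<^sup>2}"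
      by (auto simp: B1_def S1_def hop[OF ag])
    have B2e: "B2 = {\<omega>\<in>space M. g * (cmod (hRD \<omega>))\<^sup>2 < a + b * (cmod (hRE \<omega>))\<^sup>2}"
      using g by (auto simp: B2_def S2_def hop)
    have P1: "prob B1 = p (\<alpha>*g)"
      unfolding B1e p_def using g assms(4) a0 b0
      by (intro L2[OF assms(1) eSR eSE ind1']) auto
    have P2: "prob B2 = p g"
      unfolding B2e p_def using g a0 b0
      by (intro L2[OF assms(1) eRD eRE ind2']) auto
    have "B1 \<inter> B2 = (\<lambda>\<omega>. ((hSR \<omega>, hSE \<omega>), (hRD \<omega>, hRE \<omega>))) -` (S1 \<times> S2) \<inter> space M"
      by (auto simp: B1_def B2_def)
    then have P12: "prob (B1 \<inter> B2) = prob B1 * prob B2"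
      using indep_varD[OF indP S1m S2m] by (simp add: B1_def B2_def)
    have ev: "{\<omega> \<in> space M. R3 \<alpha> g gE (hSR \<omega>) (hRD \<omega>) (hSE \<omega>) (hRE \<omega>) < Rt} = B1 \<union> B2"
      using assms(3) by (auto simp: B1_def B2_def S1_def S2_def R3_def)
    have "prob (B1 \<union> B2) = prob B1 + prob B2 - prob (B1 \<inter> B2)"
      using B1m B2m by (intro measure_Un3) (auto simp: fmeasurable_eq_sets)
    then show ?thesis using ev P1 P2 P12 by simp
  qed
  have ev: "\<forall>\<^sub>F g in at_top. g * (p (\<alpha>*g) + p g - p (\<alpha>*g) * p g) =
      g * measure M {\<omega> \<in> space M. R3 \<alpha> g gE (hSR \<omega>) (hRD \<omega>) (hSE \<omega>) (hRE \<omega>) < Rt}"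
    using eventually_gt_at_top[of 0] by eventually_elim (simp add: main)
  have "((\<lambda>g. g * (p (\<alpha>*g) + p g - p (\<alpha>*g) * p g)) \<longlongrightarrow> M3 \<alpha> gE Rt) at_top"
    unfolding M3eq p_def using lim_main[OF a0 b0 assms(4)] by simp
  then have "((\<lambda>gD. gD * measure M {\<omega> \<in> space M. R3 \<alpha> gD gE (hSR \<omega>) (hRD \<omega>) (hSE \<omega>) (hRE \<omega>) < Rt})
       \<longlongrightarrow> M3 \<alpha> gE Rt) at_top"
    by (rule tendsto_cong[THEN iffD1, rotated]) (rule ev)
  with M3pos show ?thesis by simp
qed

end
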